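(* Fix an integer $k\ge 2$. For all but $O_k(N^{k-1})$ choices of positive integers $n_1<n_2<\cdots<n_k\le N$, the polynomial $F(x)=1+x^{n_1}+\cdots+x^{n_k}$ has exactly one irreducible non-reciprocal factor in $\mathbb{Z}[x]$ (counted with multiplicity, and up to sign); equivalently, the non-reciprocal part of $F(x)$ is irreducible.
   Context: For $f(x)\in\mathbb{R}[x]$ nonzero, its reciprocal is $\tilde f(x)=x^{\deg f}f(1/x)$; $f$ is called reciprocal if $f(x)=\pm\tilde f(x)$ and non-reciprocal otherwise. The non-reciprocal part of $f(x)\in\mathbb{Z}[x]$ is $f(x)$ removed of every irreducible reciprocal factor in $\mathbb{Z}[x]$ having positive leading coefficient (including constant irreducible factors). The implied constant in $O_k$ depends only on $k$. *)

theory Defs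
  imports "HOL-Computational_Algebra.Computational_Algebra"
begin

text \<open>The reciprocal of f is x^(deg f) f(1/x), i.e. the coefficient list reversed,
  which is the library's reflect_poly.\<close>
definition reciprocal :: "int poly \<Rightarrow> bool" where
  "reciprocal f \<longleftrightarrow> f = reflect_poly f \<or> f = - reflect_poly f"

text \<open>Non-reciprocal part: remove from the (normalized, i.e. positive leading coefficient)
  prime = irreducible factorization of f in Z[x] every reciprocal factor (this includes
  all constant irreducible factors), keeping the sign of f.\<close>
definition nonrec_part :: "int poly \<Rightarrow> int poly" where
  "nonrec_part f = unit_factor f *
     prod_mset (filter_mset (\<lambda>p. \<not> reciprocal p) (prime_factorization f))"

definition F_poly :: "nat set \<Rightarrow> int poly" where
  "F_poly S = 1 + (\<Sum>n\<in>S. monom 1 n)"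

end

theory Submission
  imports Defs
begin



definition ind :: "nat set \<Rightarrow> int poly" where "ind B = (\<Sum>b\<in>B. monom 1 b)"

lemma coeff_ind: "finite B \<Longrightarrow> coeff (ind B) n = (if n \<in> B then 1 else 0)"
  by (simp add: ind_def coeff_sum coeff_monom)

lemma F_poly_ind: "finite S \<Longrightarrow> 0 \<notin> S \<Longrightarrow> F_poly S = ind (insert 0 S)"
  by (simp add: F_poly_def ind_def monom_0 one_pCons)

lemma degree_ind: assumes "finite B" "B \<noteq> {}" shows "degree (ind B) = Max B"
proof (rule antisym)
  show "degree (ind B) \<le> Max B"
    by (rule degree_le) (use assms in \<open>auto simp: coeff_ind\<close>)
  show "Max B \<le> degree (ind B)"
    by (rule le_degree) (use assms in \<open>auto simp: coeff_ind\<close>)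
qed

lemma mem_refl_image: fixes B :: "nat set" assumes "finite B" "B \<noteq> {}"
  shows "n \<in> (\<lambda>b. Max B - b) ` B \<longleftrightarrow> n \<le> Max B \<and> Max B - n \<in> B"
proof
  assume "n \<in> (\<lambda>b. Max B - b) ` B"
  then obtain b where b: "b \<in> B" "n = Max B - b" by auto
  have bm: "b \<le> Max B" using b assms by simp
  have "Max B - (Max B - b) = b" using diff_diff_cancel[OF bm] .
  then show "n \<le> Max B \<and> Max B - n \<in> B" using b by simp
next
  assume h: "n \<le> Max B \<and> Max B - n \<in> B"
  then have "n = Max B - (Max B - n)" by simp
  then show "n \<in> (\<lambda>b. Max B - b) ` B" using h by blast
qed

lemma reflect_ind: assumes "finite B" "B \<noteq> {}"
  shows "reflect_poly (ind B) = ind ((\<lambda>b. Max B - b) ` B)"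
proof (rule poly_eqI)
  fix n
  have fin: "finite ((\<lambda>b. Max B - b) ` B)" using assms by simp
  show "coeff (reflect_poly (ind B)) n = coeff (ind ((\<lambda>b. Max B - b) ` B)) n"
    unfolding coeff_reflect_poly coeff_ind[OF fin] degree_ind[OF assms] coeff_ind[OF assms(1)]
      mem_refl_image[OF assms] by auto
qed


definition B3 :: "nat set \<Rightarrow> bool" where
  "B3 B \<longleftrightarrow> (\<forall>X Y. set_mset X \<subseteq> B \<longrightarrow> set_mset Y \<subseteq> B \<longrightarrow> size X = 3 \<longrightarrow> size Y = 3
      \<longrightarrow> sum_mset X = sum_mset Y \<longrightarrow> X = Y)"

lemma B3D: assumes "B3 B" "x1 \<in> B" "x2 \<in> B" "x3 \<in> B" "y1 \<in> B" "y2 \<in> B" "y3 \<in> B"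
  "x1 + x2 + x3 = y1 + y2 + y3"
  shows "{#x1, x2, x3#} = {#y1, y2, y3#}"
proof -
  have "set_mset {#x1, x2, x3#} \<subseteq> B" "set_mset {#y1, y2, y3#} \<subseteq> B" using assms by auto
  moreover have "size {#x1, x2, x3#} = 3" "size {#y1, y2, y3#} = 3" by simp_all
  moreover have "sum_mset {#x1, x2, x3#} = sum_mset {#y1, y2, y3#}" using assms(8) by (simp add: algebra_simps)
  ultimately show ?thesis using assms(1) unfolding B3_def by blast
qed

lemma mset_case: "{#p, q', s#} = {#p', q, r#} \<Longrightarrow> p \<noteq> q \<Longrightarrow> p' \<noteq> q' \<Longrightarrow> p = p' \<or> q = q'"
  for p q p' q' r s :: nat
proof (rule ccontr)
  assume E: "{#p, q', s#} = {#p', q, r#}" and ne: "p \<noteq> q" "p' \<noteq> q'" and c: "\<not> (p = p' \<or> q = q')"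
  have "p \<in># {#p', q, r#}" using E[symmetric] by simp
  then have pr: "p = r" using ne c by auto
  have "q' \<in># {#p', q, r#}" using E[symmetric] by simp
  then have qr: "q' = r" using ne c by auto
  have "add_mset r {#r, s#} = add_mset r {#p', q#}" using E pr qr by (simp add: add_mset_commute)
  then have "{#r, s#} = {#p', q#}" by simp
  then have "r \<in># {#p', q#}" by (metis add_mset_commute union_single_eq_member)
  then show False using pr ne c by auto
qed

lemma two_elems: assumes "finite S" "card S \<ge> 2" obtains x y where "x \<in> S" "y \<in> S" "x \<noteq> y"
proof -
  have "S \<noteq> {}" using assms by auto
  then obtain x where x: "x \<in> S" by auto
  have "card (S - {x}) \<ge> 1" using assms x by simp
  then have "S - {x} \<noteq> {}" by (metis card.empty not_one_le_zero)
  then obtain y where "y \<in> S - {x}" by auto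
  then show ?thesis using that x by auto
qed


lemma core:
  fixes A B :: "nat set"
  assumes fA: "finite A" and fB: "finite B" and A0: "0 \<in> A" and B0: "0 \<in> B"
    and cAB: "card A = card B" and c3: "card B \<ge> 3" and b3: "B3 B"
    and supp: "\<forall>a1\<in>A. \<forall>a2\<in>A. \<exists>b1\<in>B. \<exists>b2\<in>B. int a1 - int a2 = int b1 - int b2"
  shows "A = B \<or> A = (\<lambda>b. Max B - b) ` B"
proof -
  define A' where "A' = A - {0}"
  have fA': "finite A'" using fA by (simp add: A'_def)
  have cA': "card A' = card B - 1" using cAB A0 fA by (simp add: A'_def)
  have "\<forall>a\<in>A'. \<exists>pq. fst pq \<in> B \<and> snd pq \<in> B \<and> int a = int (fst pq) - int (snd pq)"
    using supp A0 unfolding A'_def by force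
  then obtain PQ where PQ: "\<forall>a\<in>A'. fst (PQ a) \<in> B \<and> snd (PQ a) \<in> B \<and> int a = int (fst (PQ a)) - int (snd (PQ a))"
    by metis
  define P where "P a = fst (PQ a)" for a
  define Q where "Q a = snd (PQ a)" for a
  have PB: "P a \<in> B" and QB: "Q a \<in> B" and PQe: "int a = int (P a) - int (Q a)" if "a \<in> A'" for a
    using PQ that by (auto simp: P_def Q_def)
  have Ppos: "Q a < P a" if "a \<in> A'" for a
    using PQe[OF that] that by (auto simp: A'_def)
  have K: "P a = P a' \<or> Q a = Q a'" if "a \<in> A'" "a' \<in> A'" "a \<noteq> a'" for a a'
  proof -
    have "a \<in> A" "a' \<in> A" using that by (auto simp: A'_def)
    then obtain r s where rs: "r \<in> B" "s \<in> B" "int a - int a' = int r - int s"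
      using supp by blast
    have "P a + Q a' + s = P a' + Q a + r"
      using rs(3) PQe[OF that(1)] PQe[OF that(2)] by linarith
    then have "{#P a, Q a', s#} = {#P a', Q a, r#}"
      by (intro B3D[OF b3] PB QB rs that)
    then show ?thesis
      using mset_case Ppos[OF that(1)] Ppos[OF that(2)] by (metis less_irrefl)
  qed
  have "card A' \<ge> 2" using cA' c3 by simp
  then obtain a1 a2 where a12: "a1 \<in> A'" "a2 \<in> A'" "a1 \<noteq> a2" using two_elems[OF fA'] by metis
  have a0: "a \<noteq> 0" if "a \<in> A'" for a using that by (simp add: A'_def)
  have AA': "A = insert 0 A'" using A0 by (auto simp: A'_def)
  show ?thesis
  proof (cases "P a1 = P a2")
    case True
    define \<pi> where "\<pi> = P a1"
    have allP: "P a = \<pi>" if "a \<in> A'" for a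
    proof (rule ccontr)
      assume ne: "P a \<noteq> \<pi>"
      then have "a \<noteq> a1" "a \<noteq> a2" using True by (auto simp: \<pi>_def)
      then have "Q a = Q a1" "Q a = Q a2" using K[OF that a12(1)] K[OF that a12(2)] ne True
        by (auto simp: \<pi>_def)
      then have "int a1 = int a2" using PQe[OF a12(1)] PQe[OF a12(2)] True by simp
      then show False using a12 by simp
    qed
    have aeq: "int a = int \<pi> - int (Q a)" if "a \<in> A'" for a using PQe[OF that] allP[OF that] by simp
    have injQ: "inj_on Q A'"
      by (rule inj_onI) (metis aeq of_nat_eq_iff)
    have sub: "Q ` A' \<subseteq> B - {\<pi>}" using QB Ppos allP by fastforce
    have \<pi>B: "\<pi> \<in> B" using PB[OF a12(1)] by (simp add: \<pi>_def)
    have "card (Q ` A') = card (B - {\<pi>})"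
      using card_image[OF injQ] cA' \<pi>B fB by simp
    then have Qim: "Q ` A' = B - {\<pi>}" using sub fB by (simp add: card_subset_eq)
    have "\<forall>b\<in>B. b \<le> \<pi>"
    proof
      fix b assume "b \<in> B"
      show "b \<le> \<pi>"
      proof (cases "b = \<pi>")
        case False
        then have "b \<in> Q ` A'" using Qim \<open>b \<in> B\<close> by auto
        then show ?thesis using Ppos allP by fastforce
      qed simp
    qed
    then have m: "Max B = \<pi>" using \<pi>B fB by (intro Max_eqI) auto
    have "A = (\<lambda>b. \<pi> - b) ` B"
    proof
      show "A \<subseteq> (\<lambda>b. \<pi> - b) ` B"
      proof
        fix a assume "a \<in> A"
        show "a \<in> (\<lambda>b. \<pi> - b) ` B"
        proof (cases "a = 0")
          case True then show ?thesis using \<pi>B by force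
        next
          case False
          then have "a \<in> A'" using \<open>a \<in> A\<close> by (simp add: A'_def)
          have "Q a \<le> \<pi>" using aeq[OF \<open>a \<in> A'\<close>] by linarith
          then have "int a = int (\<pi> - Q a)" using aeq[OF \<open>a \<in> A'\<close>] by (simp add: of_nat_diff)
          then have "a = \<pi> - Q a" by (simp only: of_nat_eq_iff)
          then show ?thesis using QB \<open>a \<in> A'\<close> by blast
        qed
      qed
      show "(\<lambda>b. \<pi> - b) ` B \<subseteq> A"
      proof
        fix x assume "x \<in> (\<lambda>b. \<pi> - b) ` B"
        then obtain b where b: "b \<in> B" "x = \<pi> - b" by auto
        show "x \<in> A"
        proof (cases "b = \<pi>")
          case True then show ?thesis using b A0 by simp
        next
          case False
          then obtain a where a: "a \<in> A'" "b = Q a" using Qim b by auto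
          have "Q a \<le> \<pi>" using aeq[OF a(1)] by linarith
          then have "int x = int a" using aeq[OF a(1)] b a(2) by (simp add: of_nat_diff)
          then have "x = a" by (simp only: of_nat_eq_iff)
          then show ?thesis using a by (simp add: A'_def)
        qed
      qed
    qed
    then show ?thesis using m by simp
  next
    case False
    then have QQ: "Q a1 = Q a2" using K[OF a12] by simp
    define \<theta> where "\<theta> = Q a1"
    have allQ: "Q a = \<theta>" if "a \<in> A'" for a
    proof (rule ccontr)
      assume ne: "Q a \<noteq> \<theta>"
      then have "a \<noteq> a1" "a \<noteq> a2" using QQ by (auto simp: \<theta>_def)
      then have "P a = P a1" "P a = P a2" using K[OF that a12(1)] K[OF that a12(2)] ne QQ
        by (auto simp: \<theta>_def)
      then show False using False by simp
    qed
    have aeq: "int a = int (P a) - int \<theta>" if "a \<in> A'" for a using PQe[OF that] allQ[OF that] by simp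
    have injP: "inj_on P A'"
      by (rule inj_onI) (metis aeq of_nat_eq_iff diff_left_imp_eq)
    have sub: "P ` A' \<subseteq> B - {\<theta>}" using PB Ppos allQ by fastforce
    have \<theta>B: "\<theta> \<in> B" using QB[OF a12(1)] by (simp add: \<theta>_def)
    have "card (P ` A') = card (B - {\<theta>})"
      using card_image[OF injP] cA' \<theta>B fB by simp
    then have Pim: "P ` A' = B - {\<theta>}" using sub fB by (simp add: card_subset_eq)
    have t0: "\<theta> = 0"
    proof (rule ccontr)
      assume "\<theta> \<noteq> 0"
      then have "0 \<in> P ` A'" using Pim B0 by auto
      then show False using Ppos allQ by fastforce
    qed
    have "A = B"
    proof
      show "A \<subseteq> B"
      proof
        fix a assume "a \<in> A"
        show "a \<in> B"
        proof (cases "a = 0")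
          case True then show ?thesis using B0 by simp
        next
          case False
          then have "a \<in> A'" using \<open>a \<in> A\<close> by (simp add: A'_def)
          then have "a = P a" using aeq t0 by simp
          then show ?thesis using PB \<open>a \<in> A'\<close> by metis
        qed
      qed
      show "B \<subseteq> A"
      proof
        fix b assume "b \<in> B"
        show "b \<in> A"
        proof (cases "b = 0")
          case True then show ?thesis using A0 by simp
        next
          case False
          then obtain a where a: "a \<in> A'" "b = P a" using Pim \<open>b \<in> B\<close> t0 by auto
          then have "b = a" using aeq[OF a(1)] t0 by simp
          then show ?thesis using a by (simp add: A'_def)
        qed
      qed
    qed
    then show ?thesis by simp
  qed
qed




lemma coeff_ind_mult: assumes "finite A" "finite C"
  shows "coeff (ind A * ind C) n = (\<Sum>a\<in>A. \<Sum>c\<in>C. if a + c = n then 1 else 0)"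
proof -
  have "ind A * ind C = (\<Sum>a\<in>A. \<Sum>c\<in>C. monom 1 (a + c))"
    by (simp add: ind_def sum_product mult_monom)
  then show ?thesis by (simp add: coeff_sum coeff_monom)
qed

lemma ind_mult_nz: assumes "finite A" "finite C"
  shows "coeff (ind A * ind C) n \<noteq> 0 \<longleftrightarrow> (\<exists>a\<in>A. \<exists>c\<in>C. a + c = n)"
proof -
  have "(\<Sum>a\<in>A. \<Sum>c\<in>C. (if a + c = n then 1 else 0::int)) = 0 \<longleftrightarrow>
        (\<forall>a\<in>A. (\<Sum>c\<in>C. (if a + c = n then 1 else 0::int)) = 0)"
    using assms by (intro sum_nonneg_eq_0_iff) (auto intro: sum_nonneg)
  also have "\<dots> \<longleftrightarrow> (\<forall>a\<in>A. \<forall>c\<in>C. a + c \<noteq> n)"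
    using assms by (simp add: sum_nonneg_eq_0_iff)
  finally show ?thesis unfolding coeff_ind_mult[OF assms] by blast
qed

lemma sum_rev_atMost: "(\<Sum>i\<le>d. f (d - i)) = (\<Sum>i\<le>d. f i)" for f :: "nat \<Rightarrow> 'a::comm_monoid_add"
  by (rule sum.reindex_bij_witness[of _ "\<lambda>i. d - i" "\<lambda>i. d - i"]) auto

lemma sumsq: "coeff (p * reflect_poly p) (degree p) = (\<Sum>i\<le>degree p. (coeff p i)^2)"
  for p :: "int poly"
  unfolding coeff_mult coeff_reflect_poly
  by (intro sum.cong) (auto simp: power2_eq_square)

lemma poly1_reflect: "coeff p 0 \<noteq> 0 \<Longrightarrow> poly (reflect_poly p) 1 = poly p 1"
  for p :: "int poly"
proof -
  assume h: "coeff p 0 \<noteq> 0"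
  have "poly (reflect_poly p) 1 = (\<Sum>i\<le>degree p. coeff (reflect_poly p) i)"
    by (simp add: poly_altdef h)
  also have "\<dots> = (\<Sum>i\<le>degree p. coeff p (degree p - i))"
    by (intro sum.cong) (auto simp: coeff_reflect_poly)
  also have "\<dots> = (\<Sum>i\<le>degree p. coeff p i)" by (rule sum_rev_atMost)
  also have "\<dots> = poly p 1" by (simp add: poly_altdef)
  finally show ?thesis .
qed

lemma reflect_uminus: "reflect_poly (- p) = - reflect_poly p" for p :: "int poly"
  by (rule poly_eqI) (simp add: coeff_reflect_poly)

lemma abs_le_sq: "\<bar>x\<bar> \<le> x^2" for x :: int
proof (cases "x = 0")
  case False
  then have "1 \<le> \<bar>x\<bar>" by simp
  then have "\<bar>x\<bar> * 1 \<le> \<bar>x\<bar> * \<bar>x\<bar>" by (intro mult_left_mono) auto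
  then show ?thesis by (simp add: power2_eq_square abs_mult[symmetric])
qed simp

lemma sq_sum: fixes w :: "nat \<Rightarrow> int"
  assumes fin: "finite I" and s2: "(\<Sum>i\<in>I. (w i)^2) = n" and s1: "(\<Sum>i\<in>I. w i)^2 = n^2"
  shows "(\<forall>i\<in>I. w i = 0 \<or> w i = 1) \<or> (\<forall>i\<in>I. w i = 0 \<or> w i = -1)"
proof -
  have "0 \<le> (\<Sum>i\<in>I. (w i)^2)" by (intro sum_nonneg) simp
  then have n0: "n \<ge> 0" using s2 by simp
  have "(\<Sum>i\<in>I. w i) = n \<or> (\<Sum>i\<in>I. w i) = - n" using s1 by (simp add: power2_eq_iff)
  then have a: "\<bar>\<Sum>i\<in>I. w i\<bar> = n" using n0 by auto
  have le1: "\<bar>\<Sum>i\<in>I. w i\<bar> \<le> (\<Sum>i\<in>I. \<bar>w i\<bar>)" by (rule sum_abs)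
  have le2: "(\<Sum>i\<in>I. \<bar>w i\<bar>) \<le> (\<Sum>i\<in>I. (w i)^2)" by (intro sum_mono abs_le_sq)
  have "(\<Sum>i\<in>I. (w i)^2 - \<bar>w i\<bar>) = 0" using a le1 le2 s2 by (simp add: sum_subtractf)
  then have sq: "\<forall>i\<in>I. (w i)^2 - \<bar>w i\<bar> = 0"
    using fin by (subst (asm) sum_nonneg_eq_0_iff) (auto simp: abs_le_sq)
  have abs_sum: "(\<Sum>i\<in>I. \<bar>w i\<bar>) = n" using a le1 le2 s2 by simp
  have w1: "w i = 0 \<or> w i = 1 \<or> w i = -1" if "i \<in> I" for i
  proof -
    have "(w i)^2 = \<bar>w i\<bar>" using sq that by simp
    then have "\<bar>w i\<bar> * \<bar>w i\<bar> = \<bar>w i\<bar> * 1" by (simp add: power2_eq_square abs_mult[symmetric])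
    then have "\<bar>w i\<bar> = 0 \<or> \<bar>w i\<bar> = 1" by (metis mult_left_cancel)
    then show ?thesis by auto
  qed
  show ?thesis
  proof (cases "(\<Sum>i\<in>I. w i) = n")
    case True
    then have "(\<Sum>i\<in>I. \<bar>w i\<bar> - w i) = 0" using abs_sum by (simp add: sum_subtractf)
    then have h: "\<forall>i\<in>I. \<bar>w i\<bar> - w i = 0" using fin by (subst (asm) sum_nonneg_eq_0_iff) auto
    have "\<forall>i\<in>I. w i = 0 \<or> w i = 1"
    proof
      fix i assume i: "i \<in> I"
      show "w i = 0 \<or> w i = 1" using w1[OF i] h i by auto
    qed
    then show ?thesis by blast
  next
    case False
    then have "(\<Sum>i\<in>I. w i) = - n" using a by auto
    then have "(\<Sum>i\<in>I. \<bar>w i\<bar> + w i) = 0" using abs_sum by (simp add: sum.distrib)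
    then have h: "\<forall>i\<in>I. \<bar>w i\<bar> + w i = 0" using fin by (subst (asm) sum_nonneg_eq_0_iff) auto
    have "\<forall>i\<in>I. w i = 0 \<or> w i = -1"
    proof
      fix i assume i: "i \<in> I"
      show "w i = 0 \<or> w i = -1" using w1[OF i] h i by auto
    qed
    then show ?thesis by blast
  qed
qed




lemma ind_sums:
  assumes fB: "finite B" "B \<noteq> {}"
  shows "(\<Sum>i\<le>Max B. (coeff (ind B) i)^2) = int (card B)"
    "(\<Sum>i\<le>Max B. coeff (ind B) i) = int (card B)"
proof -
  have sub: "B \<subseteq> {..Max B}" using fB by auto
  have "(\<Sum>i\<le>Max B. (coeff (ind B) i)^2) = (\<Sum>i\<in>B. (coeff (ind B) i)^2)"
    by (rule sum.mono_neutral_right) (use sub fB in \<open>auto simp: coeff_ind\<close>)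
  also have "\<dots> = (\<Sum>i\<in>B. 1)" using fB by (intro sum.cong) (auto simp: coeff_ind)
  finally show "(\<Sum>i\<le>Max B. (coeff (ind B) i)^2) = int (card B)" by simp
  have "(\<Sum>i\<le>Max B. coeff (ind B) i) = (\<Sum>i\<in>B. coeff (ind B) i)"
    by (rule sum.mono_neutral_right) (use sub fB in \<open>auto simp: coeff_ind\<close>)
  also have "\<dots> = (\<Sum>i\<in>B. 1)" using fB by (intro sum.cong) (auto simp: coeff_ind)
  finally show "(\<Sum>i\<le>Max B. coeff (ind B) i) = int (card B)" by simp
qed

lemma zero_one_case:
  fixes V :: "int poly" and B :: "nat set"
  assumes fB: "finite B" and B0: "0 \<in> B" and c3: "card B \<ge> 3" and b3: "B3 B"
    and eq: "V * reflect_poly V = ind B * reflect_poly (ind B)"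
    and V0: "coeff V 0 \<noteq> 0" and degV: "degree V = Max B"
    and zo: "\<forall>i\<le>Max B. coeff V i = 0 \<or> coeff V i = 1"
    and ssq: "(\<Sum>i\<le>Max B. (coeff V i)^2) = int (card B)"
  shows "V = ind B \<or> V = reflect_poly (ind B)"
proof -
  define m where "m = Max B"
  have Bne: "B \<noteq> {}" using B0 by auto
  define A where "A = {i. i \<le> m \<and> coeff V i = 1}"
  have Asub: "A \<subseteq> {..m}" by (auto simp: A_def)
  have fA: "finite A" using Asub finite_subset by blast
  have cV: "coeff V i = (if i \<in> A then 1 else 0)" for i
  proof (cases "i \<le> m")
    case True then show ?thesis using zo by (auto simp: A_def m_def)
  next
    case False then show ?thesis using degV by (auto simp: A_def m_def coeff_eq_0)
  qed
  have VA: "V = ind A" by (rule poly_eqI) (simp add: cV coeff_ind[OF fA])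
  have A0: "0 \<in> A" using V0 cV by (metis zero_neq_one)
  have "V \<noteq> 0" using V0 by auto
  then have "lead_coeff V \<noteq> 0" by simp
  then have "coeff V m \<noteq> 0" using degV by (simp add: m_def)
  then have mA: "m \<in> A" using cV by (metis zero_neq_one)
  have MaxA: "Max A = m" using mA Asub fA by (intro Max_eqI) auto
  have Ane: "A \<noteq> {}" using A0 by auto
  have "(\<Sum>i\<le>m. (coeff V i)^2) = (\<Sum>i\<in>A. (coeff V i)^2)"
    by (rule sum.mono_neutral_right) (use Asub in \<open>auto simp: cV\<close>)
  also have "\<dots> = (\<Sum>i\<in>A. 1)" by (intro sum.cong) (auto simp: cV)
  finally have "int (card A) = int (card B)" using ssq by (simp add: m_def)
  then have cAB: "card A = card B" by simp
  have rV: "reflect_poly V = ind ((\<lambda>b. m - b) ` A)" using reflect_ind[OF fA Ane] VA MaxA by simp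
  have rB: "reflect_poly (ind B) = ind ((\<lambda>b. m - b) ` B)" using reflect_ind[OF fB Bne] by (simp add: m_def)
  have eq2: "ind A * ind ((\<lambda>b. m - b) ` A) = ind B * ind ((\<lambda>b. m - b) ` B)"
    using eq VA rV rB by simp
  have supp: "\<forall>a1\<in>A. \<forall>a2\<in>A. \<exists>b1\<in>B. \<exists>b2\<in>B. int a1 - int a2 = int b1 - int b2"
  proof (intro ballI)
    fix a1 a2 assume a: "a1 \<in> A" "a2 \<in> A"
    have "coeff (ind A * ind ((\<lambda>b. m - b) ` A)) (a1 + (m - a2)) \<noteq> 0"
      using a fA by (subst ind_mult_nz) auto
    then have "coeff (ind B * ind ((\<lambda>b. m - b) ` B)) (a1 + (m - a2)) \<noteq> 0" using eq2 by simp
    then obtain b1 c where bc: "b1 \<in> B" "c \<in> (\<lambda>b. m - b) ` B" "b1 + c = a1 + (m - a2)"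
      using fB by (subst (asm) ind_mult_nz) auto
    then obtain b2 where b2: "b2 \<in> B" "c = m - b2" by auto
    have "b2 \<le> m" using b2 fB by (simp add: m_def)
    moreover have "a2 \<le> m" using a Asub by auto
    ultimately have "int b1 + (int m - int b2) = int a1 + (int m - int a2)"
      using bc(3) b2(2) by (metis of_nat_add of_nat_diff)
    then have "int a1 - int a2 = int b1 - int b2" by linarith
    then show "\<exists>b1\<in>B. \<exists>b2\<in>B. int a1 - int a2 = int b1 - int b2" using bc(1) b2(1) by blast
  qed
  have "A = B \<or> A = (\<lambda>b. Max B - b) ` B"
    by (rule core[OF fA fB A0 B0 cAB c3 b3 supp])
  then show ?thesis
  proof
    assume "A = B" then show ?thesis using VA by simp
  next
    assume "A = (\<lambda>b. Max B - b) ` B" then show ?thesis using VA rB by (simp add: m_def)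
  qed
qed

lemma homometric:
  fixes W :: "int poly" and B :: "nat set"
  assumes fB: "finite B" and B0: "0 \<in> B" and c3: "card B \<ge> 3" and b3: "B3 B"
    and eq: "W * reflect_poly W = ind B * reflect_poly (ind B)"
  shows "W = ind B \<or> W = - ind B \<or> W = reflect_poly (ind B) \<or> W = - reflect_poly (ind B)"
proof -
  define m where "m = Max B"
  have Bne: "B \<noteq> {}" using B0 by auto
  have mB: "m \<in> B" using fB Bne by (simp add: m_def)
  have f0: "coeff (ind B) 0 = 1" using B0 fB by (simp add: coeff_ind)
  have degf: "degree (ind B) = m" using degree_ind[OF fB Bne] by (simp add: m_def)
  have lf: "lead_coeff (ind B) = 1" using degf mB fB by (simp add: coeff_ind)
  have fnz: "ind B \<noteq> 0" using f0 by auto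
  have "coeff (W * reflect_poly W) 0 = coeff (ind B * reflect_poly (ind B)) 0" using eq by simp
  then have c01: "coeff W 0 * lead_coeff W = 1" by (simp add: coeff_mult_0 f0 lf)
  then have W0: "coeff W 0 \<noteq> 0" by auto
  then have Wnz: "W \<noteq> 0" by auto
  have "degree (W * reflect_poly W) = 2 * degree W" using W0 Wnz by (simp add: degree_mult_eq)
  moreover have "degree (ind B * reflect_poly (ind B)) = 2 * m" using f0 fnz degf by (simp add: degree_mult_eq)
  ultimately have degW: "degree W = m" using eq by simp
  have ssq: "(\<Sum>i\<le>m. (coeff W i)^2) = int (card B)"
  proof -
    have "(\<Sum>i\<le>m. (coeff W i)^2) = coeff (W * reflect_poly W) (degree W)" using sumsq[of W] degW by simp
    also have "\<dots> = coeff (ind B * reflect_poly (ind B)) (degree (ind B))" using eq degW degf by simp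
    also have "\<dots> = (\<Sum>i\<le>m. (coeff (ind B) i)^2)" using sumsq[of "ind B"] degf by simp
    also have "\<dots> = int (card B)" using ind_sums[OF fB Bne] by (simp add: m_def)
    finally show ?thesis .
  qed
  have pW: "poly W 1 = (\<Sum>i\<le>m. coeff W i)" using degW by (simp add: poly_altdef)
  have pf: "poly (ind B) 1 = int (card B)" using degf ind_sums[OF fB Bne] by (simp add: poly_altdef m_def)
  have "poly (W * reflect_poly W) 1 = poly (ind B * reflect_poly (ind B)) 1" using eq by simp
  then have "poly W 1 * poly W 1 = poly (ind B) 1 * poly (ind B) 1"
    using poly1_reflect[OF W0] poly1_reflect[of "ind B"] f0 by simp
  then have s1: "(\<Sum>i\<le>m. coeff W i)^2 = (int (card B))^2" using pW pf by (simp add: power2_eq_square)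
  have "(\<forall>i\<in>{..m}. coeff W i = 0 \<or> coeff W i = 1) \<or> (\<forall>i\<in>{..m}. coeff W i = 0 \<or> coeff W i = -1)"
    by (rule sq_sum[OF _ ssq s1]) simp
  then show ?thesis
  proof
    assume h: "\<forall>i\<in>{..m}. coeff W i = 0 \<or> coeff W i = 1"
    have "W = ind B \<or> W = reflect_poly (ind B)"
      by (rule zero_one_case[OF fB B0 c3 b3 eq W0]) (use degW h ssq in \<open>auto simp: m_def\<close>)
    then show ?thesis by blast
  next
    assume h: "\<forall>i\<in>{..m}. coeff W i = 0 \<or> coeff W i = -1"
    have eq': "(- W) * reflect_poly (- W) = ind B * reflect_poly (ind B)" using eq by (simp add: reflect_uminus)
    have "- W = ind B \<or> - W = reflect_poly (ind B)"
      by (rule zero_one_case[OF fB B0 c3 b3 eq']) (use degW h ssq W0 in \<open>auto simp: m_def\<close>)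
    then show ?thesis by (metis minus_minus)
  qed
qed




definition pmeq :: "int poly \<Rightarrow> int poly \<Rightarrow> bool" where
  "pmeq a b \<longleftrightarrow> a = b \<or> a = - b"

lemma pmeq_refl: "pmeq a a" by (simp add: pmeq_def)
lemma pmeq_sym: "pmeq a b \<Longrightarrow> pmeq b a" by (auto simp: pmeq_def)
lemma pmeq_trans: "pmeq a b \<Longrightarrow> pmeq b c \<Longrightarrow> pmeq a c" by (auto simp: pmeq_def)
lemma pmeq_mult: "pmeq a b \<Longrightarrow> pmeq c d \<Longrightarrow> pmeq (a * c) (b * d)" by (auto simp: pmeq_def)
lemma pmeq_cancel_right: assumes c: "c \<noteq> 0" and h: "pmeq (a * c) (b * c)" shows "pmeq a b"
proof -
  have "a * c = b * c \<or> a * c = - (b * c)" using h by (simp add: pmeq_def)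
  then show ?thesis
  proof
    assume "a * c = b * c" then show ?thesis using c by (simp add: pmeq_def)
  next
    assume h2: "a * c = - (b * c)"
    have "(a + b) * c = 0" using h2 by (simp add: distrib_right)
    then have "a + b = 0" using c by simp
    then show ?thesis by (simp add: pmeq_def eq_neg_iff_add_eq_0)
  qed
qed
lemma pmeq_cancel_left: "c \<noteq> 0 \<Longrightarrow> pmeq (c * a) (c * b) \<Longrightarrow> pmeq a b"
  using pmeq_cancel_right[of c a b] by (simp add: mult.commute)
lemma reciprocal_pmeq: "reciprocal p \<longleftrightarrow> pmeq p (reflect_poly p)"
  by (simp add: reciprocal_def pmeq_def)

lemma pos_sq: "l \<noteq> 0 \<Longrightarrow> 0 < l * l" for l :: int
  by (auto simp: zero_less_mult_iff)

lemma pmeq_sq: assumes "pmeq (a * a) (b * b)" "b \<noteq> 0" shows "pmeq a b"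
proof -
  have "a * a = b * b \<or> a * a = - (b * b)" using assms(1) by (simp add: pmeq_def)
  then show ?thesis
  proof
    assume "a * a = b * b" then show ?thesis by (simp add: pmeq_def square_eq_iff)
  next
    assume h: "a * a = - (b * b)"
    have "lead_coeff (a * a) = lead_coeff (- (b * b))" using h by simp
    then have e: "lead_coeff a * lead_coeff a = - (lead_coeff b * lead_coeff b)"
      by (simp add: lead_coeff_mult lead_coeff_minus)
    have "lead_coeff b \<noteq> 0" using assms(2) by simp
    then have "0 < lead_coeff b * lead_coeff b" by (rule pos_sq)
    moreover have "0 \<le> lead_coeff a * lead_coeff a" by simp
    ultimately show ?thesis using e by linarith
  qed
qed

lemma recip_prod: "(\<forall>p\<in>#M. reciprocal p) \<Longrightarrow> reciprocal (prod_mset M)"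
proof (induction M)
  case empty then show ?case by (simp add: reciprocal_def)
next
  case (add x M)
  then have "pmeq x (reflect_poly x)" "pmeq (prod_mset M) (reflect_poly (prod_mset M))"
    by (auto simp: reciprocal_pmeq)
  then have "pmeq (x * prod_mset M) (reflect_poly x * reflect_poly (prod_mset M))" by (rule pmeq_mult)
  then show ?case by (simp add: reciprocal_pmeq reflect_poly_mult)
qed




lemma main_alg:
  fixes S :: "nat set"
  assumes fS: "finite S" and S0: "0 \<notin> S" and cS: "card S \<ge> 2" and b3: "B3 (insert 0 S)"
  shows "irreducible (nonrec_part (F_poly S))"
proof -
  define B where "B = insert 0 S"
  define f where "f = F_poly S"
  have fB: "finite B" using fS by (simp add: B_def)
  have B0: "0 \<in> B" by (simp add: B_def)
  have cB: "card B \<ge> 3" using cS fS S0 by (simp add: B_def)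
  have b3': "B3 B" using b3 by (simp add: B_def)
  have fB': "f = ind B" using F_poly_ind[OF fS S0] by (simp add: f_def B_def)
  have Bne: "B \<noteq> {}" using B0 by auto
  define m where "m = Max B"
  have mB: "m \<in> B" using fB Bne by (simp add: m_def)
  have f0: "coeff f 0 = 1" using fB' B0 fB by (simp add: coeff_ind)
  have degf: "degree f = m" using degree_ind[OF fB Bne] fB' by (simp add: m_def)
  have lf: "lead_coeff f = 1" using degf mB fB fB' by (simp add: coeff_ind)
  have fnz: "f \<noteq> 0" using f0 by auto
  have homo: "pmeq W f \<or> pmeq W (reflect_poly f)" if "W * reflect_poly W = f * reflect_poly f" for W
  proof -
    have "W = ind B \<or> W = - ind B \<or> W = reflect_poly (ind B) \<or> W = - reflect_poly (ind B)"
      using homometric[OF fB B0 cB b3'] that fB' by simp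
    then show ?thesis using fB' by (auto simp: pmeq_def)
  qed
  have uf: "unit_factor f = 1" by (simp add: unit_factor_poly_def lf one_pCons)
  define M where "M = prime_factorization f"
  define P where "P = filter_mset (\<lambda>p. \<not> reciprocal p) M"
  define R where "R = filter_mset reciprocal M"
  have MPR: "M = P + R" unfolding P_def R_def using multiset_partition[of M "\<lambda>p. \<not> reciprocal p"] by simp
  have nf: "normalize f = f" using unit_factor_mult_normalize[of f] uf by simp
  have npM: "normalize (prod_mset M) = f"
    using prod_mset_prime_factorization_weak[OF fnz] nf by (simp add: M_def)
  then have pMnz: "prod_mset M \<noteq> 0" using fnz by auto
  have "is_unit (unit_factor (prod_mset M))" using pMnz by (rule unit_factor_is_unit)
  then obtain w where w: "1 = unit_factor (prod_mset M) * w" by (auto elim!: dvdE)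
  have "prod_mset M = unit_factor (prod_mset M) * f" using unit_factor_mult_normalize[of "prod_mset M"] npM by simp
  then have "w * prod_mset M = f" using w by (metis mult.assoc mult.commute mult_1)
  then have fM: "f = w * prod_mset P * prod_mset R" using MPR by (simp add: mult.assoc)
  have "is_unit w" using w by (metis dvdI mult.commute)
  then obtain r where wr: "w = [:r:]" by (auto simp: is_unit_poly_iff)
  then have recw: "reciprocal w" by (simp add: reciprocal_def)
  have nrp: "nonrec_part f = prod_mset P" by (simp add: nonrec_part_def uf P_def M_def)
  show ?thesis unfolding f_def[symmetric] nrp
  proof (rule ccontr)
    assume nirr: "\<not> irreducible (prod_mset P)"
    consider "size P = 0" | "size P = 1" | "size P \<ge> 2" by linarith
    then show False
    proof cases
      case 1
      then have Pe: "P = {#}" by simp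
      have "reciprocal (prod_mset (add_mset w R))" by (rule recip_prod) (simp add: R_def recw)
      then have "reciprocal f" using fM Pe by simp
      then have "f = reflect_poly f \<or> f = - reflect_poly f" by (simp add: reciprocal_def)
      moreover have "f \<noteq> - reflect_poly f"
      proof
        assume "f = - reflect_poly f"
        then have "coeff f 0 = coeff (- reflect_poly f) 0" by simp
        then show False using f0 lf by simp
      qed
      ultimately have rf: "reflect_poly f = f" by simp
      have rfB: "reflect_poly f = ind ((\<lambda>b. m - b) ` B)" using reflect_ind[OF fB Bne] fB' by (simp add: m_def)
      have fin_img: "finite ((\<lambda>b. m - b) ` B)" using fB by simp
      have img: "(\<lambda>b. m - b) ` B = B"
      proof (rule set_eqI)
        fix n
        have "coeff (ind ((\<lambda>b. m - b) ` B)) n = coeff (ind B) n" using rf rfB fB' by simp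
        then show "n \<in> (\<lambda>b. m - b) ` B \<longleftrightarrow> n \<in> B"
          unfolding coeff_ind[OF fin_img] coeff_ind[OF fB] by (auto split: if_splits)
      qed
      obtain x y where xy: "x \<in> S" "y \<in> S" "x \<noteq> y" using two_elems[OF fS cS] by blast
      have "\<exists>b\<in>S. b \<noteq> m" using xy by (cases "x = m") auto
      then obtain b where b: "b \<in> S" "b \<noteq> m" by blast
      have bB: "b \<in> B" using b by (simp add: B_def)
      have bm: "b \<le> m" using bB fB by (simp add: m_def)
      have mbB: "m - b \<in> B" using img bB by blast
      have "b + (m - b) + 0 = m + 0 + 0" using bm by simp
      then have E: "{#b, m - b, 0#} = {#m, 0, 0#}" by (rule B3D[OF b3' bB mbB B0 mB B0 B0])
      have "b \<in># {#b, m - b, 0#}" by simp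
      then have "b \<in># {#m, 0, 0#}" using E by simp
      then have "b = m \<or> b = 0" by simp
      then show False using b S0 by auto
    next
      case 2
      then obtain g where Pg: "P = {#g#}" using size_1_singleton_mset by blast
      then have "g \<in># P" by simp
      then have "g \<in># M" by (simp add: P_def)
      then have "prime g" unfolding M_def by (rule in_prime_factors_imp_prime)
      then have "irreducible g" by (intro prime_elem_imp_irreducible prime_imp_prime_elem)
      then show False using nirr Pg by simp
    next
      case 3
      then have "P \<noteq> {#}" by auto
      then obtain g where gP: "g \<in># P" by blast
      define P1 where "P1 = P - {#g#}"
      have P1: "P = add_mset g P1" using gP by (simp add: P1_def)
      then have "size P1 \<ge> 1" using 3 by simp
      then have "P1 \<noteq> {#}" by auto
      then obtain h where hP: "h \<in># P1" by blast
      define P' where "P' = P1 - {#h#}"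
      have P': "P1 = add_mset h P'" using hP by (simp add: P'_def)
      have "h \<in># P" using P1 P' by simp
      then have nh0: "\<not> reciprocal h" by (simp add: P_def)
      have ng0: "\<not> reciprocal g" using gP by (simp add: P_def)
      have ng: "\<not> pmeq g (reflect_poly g)" using ng0 by (simp add: reciprocal_pmeq)
      have nh: "\<not> pmeq h (reflect_poly h)" using nh0 by (simp add: reciprocal_pmeq)
      define Q where "Q = w * prod_mset P' * prod_mset R"
      have fgh: "f = g * h * Q" using fM P1 P' by (simp add: Q_def mult_ac)
      have "coeff g 0 * coeff h 0 * coeff Q 0 = 1" using f0 fgh by (simp add: coeff_mult_0)
      then have g0: "coeff g 0 \<noteq> 0" and h0: "coeff h 0 \<noteq> 0" and Q0: "coeff Q 0 \<noteq> 0" by auto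
      then have gnz: "g \<noteq> 0" and hnz: "h \<noteq> 0" and Qnz: "Q \<noteq> 0" by auto
      have rf: "reflect_poly f = reflect_poly g * reflect_poly h * reflect_poly Q"
        by (simp add: fgh reflect_poly_mult)
      define W1 where "W1 = reflect_poly g * h * Q"
      have "W1 * reflect_poly W1 = f * reflect_poly f"
        by (simp add: W1_def fgh reflect_poly_mult g0 mult_ac)
      then have H1: "pmeq W1 f \<or> pmeq W1 (reflect_poly f)" by (rule homo)
      have "\<not> pmeq W1 f"
      proof
        assume "pmeq W1 f"
        then have "pmeq (reflect_poly g * (h * Q)) (g * (h * Q))" by (simp add: W1_def fgh mult.assoc)
        then have "pmeq (reflect_poly g) g" by (rule pmeq_cancel_right[rotated]) (simp add: hnz Qnz)
        then show False using ng pmeq_sym by blast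
      qed
      with H1 have "pmeq W1 (reflect_poly f)" by simp
      then have "pmeq (reflect_poly g * (h * Q)) (reflect_poly g * (reflect_poly h * reflect_poly Q))"
        by (simp add: W1_def rf mult.assoc)
      then have E1: "pmeq (h * Q) (reflect_poly h * reflect_poly Q)"
        by (rule pmeq_cancel_left[rotated]) (simp add: gnz)
      define W2 where "W2 = g * reflect_poly h * Q"
      have "W2 * reflect_poly W2 = f * reflect_poly f"
        by (simp add: W2_def fgh reflect_poly_mult h0 mult_ac)
      then have H2: "pmeq W2 f \<or> pmeq W2 (reflect_poly f)" by (rule homo)
      have "\<not> pmeq W2 f"
      proof
        assume "pmeq W2 f"
        then have "pmeq (reflect_poly h * (g * Q)) (h * (g * Q))" by (simp add: W2_def fgh mult_ac)
        then have "pmeq (reflect_poly h) h" by (rule pmeq_cancel_right[rotated]) (simp add: gnz Qnz)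
        then show False using nh pmeq_sym by blast
      qed
      with H2 have "pmeq W2 (reflect_poly f)" by simp
      then have "pmeq (reflect_poly h * (g * Q)) (reflect_poly h * (reflect_poly g * reflect_poly Q))"
        by (simp add: W2_def rf mult_ac)
      then have E2: "pmeq (g * Q) (reflect_poly g * reflect_poly Q)"
        by (rule pmeq_cancel_left[rotated]) (simp add: hnz)
      have QQ: "\<not> pmeq Q (reflect_poly Q)"
      proof
        assume pQ: "pmeq Q (reflect_poly Q)"
        have "pmeq (reflect_poly g * reflect_poly Q) (reflect_poly g * Q)"
          by (rule pmeq_mult[OF pmeq_refl pmeq_sym[OF pQ]])
        with E2 have "pmeq (g * Q) (reflect_poly g * Q)" by (rule pmeq_trans)
        then have "pmeq g (reflect_poly g)" by (rule pmeq_cancel_right[rotated]) (simp add: Qnz)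
        then show False using ng by blast
      qed
      define W3 where "W3 = reflect_poly g * reflect_poly h * Q"
      have "W3 * reflect_poly W3 = f * reflect_poly f"
        by (simp add: W3_def fgh reflect_poly_mult g0 h0 mult_ac)
      then have H3: "pmeq W3 f \<or> pmeq W3 (reflect_poly f)" by (rule homo)
      have "\<not> pmeq W3 (reflect_poly f)"
      proof
        assume "pmeq W3 (reflect_poly f)"
        then have "pmeq ((reflect_poly g * reflect_poly h) * Q) ((reflect_poly g * reflect_poly h) * reflect_poly Q)"
          by (simp add: W3_def rf)
        then have "pmeq Q (reflect_poly Q)" by (rule pmeq_cancel_left[rotated]) (simp add: gnz hnz)
        then show False using QQ by blast
      qed
      moreover have "\<not> pmeq W3 f"
      proof
        assume "pmeq W3 f"
        then have "pmeq ((reflect_poly g * reflect_poly h) * Q) ((g * h) * Q)" by (simp add: W3_def fgh)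
        then have E3: "pmeq (reflect_poly g * reflect_poly h) (g * h)"
          by (rule pmeq_cancel_right[rotated]) (simp add: Qnz)
        have "pmeq ((h * Q) * (g * Q)) ((reflect_poly h * reflect_poly Q) * (reflect_poly g * reflect_poly Q))"
          by (rule pmeq_mult[OF E1 E2])
        then have X: "pmeq ((g * h) * (Q * Q)) ((reflect_poly g * reflect_poly h) * (reflect_poly Q * reflect_poly Q))"
          by (simp add: mult_ac)
        have Y: "pmeq ((reflect_poly g * reflect_poly h) * (reflect_poly Q * reflect_poly Q)) ((g * h) * (reflect_poly Q * reflect_poly Q))"
          by (rule pmeq_mult[OF E3 pmeq_refl])
        have "pmeq ((g * h) * (Q * Q)) ((g * h) * (reflect_poly Q * reflect_poly Q))"
          by (rule pmeq_trans[OF X Y])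
        then have "pmeq (Q * Q) (reflect_poly Q * reflect_poly Q)"
          by (rule pmeq_cancel_left[rotated]) (simp add: gnz hnz)
        then have "pmeq Q (reflect_poly Q)" by (rule pmeq_sq) (simp add: Qnz)
        then show False using QQ by blast
      qed
      ultimately show False using H3 by blast
    qed
  qed
qed




lemma mset_to_list3:
  fixes X :: "nat multiset"
  assumes "size X \<le> 3" "set_mset X \<subseteq> D" "0 \<in> D"
  shows "\<exists>L. set L \<subseteq> D \<and> length L = 3 \<and> sum_list L = sum_mset X"
proof -
  define Z where "Z = X + replicate_mset (3 - size X) 0"
  define L where "L = sorted_list_of_multiset Z"
  have mL: "mset L = Z" by (simp add: L_def)
  have "set L = set_mset Z" using mL by (metis set_mset_mset)
  then have "set L \<subseteq> D" using assms by (auto simp: Z_def)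
  moreover have "length L = 3" using mL assms(1) by (metis Z_def size_mset size_union size_replicate_mset le_add_diff_inverse)
  moreover have "sum_list L = sum_mset X" using mL by (metis sum_mset_sum_list Z_def sum_mset.union sum_mset_replicate_mset mult_0_right add_0_right)
  ultimately show ?thesis by blast
qed

lemma decomp_oriented:
  fixes X Y :: "nat multiset" and S :: "nat set"
  assumes XB: "set_mset X \<subseteq> insert 0 S" and YB: "set_mset Y \<subseteq> insert 0 S"
    and sX: "size X = 3" and sY: "size Y = 3" and sum: "sum_mset X = sum_mset Y"
    and vS: "v \<in> S" and S0: "0 \<notin> S" and lt: "count Y v < count X v"
  shows "\<exists>c\<in>{1,2,3::nat}. \<exists>L1 L2. set L1 \<subseteq> insert 0 (S - {v}) \<and> length L1 = 3 \<and>
            set L2 \<subseteq> insert 0 (S - {v}) \<and> length L2 = 3 \<and> c * v + sum_list L1 = sum_list L2"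
proof -
  define X' where "X' = filter_mset (\<lambda>u. u \<noteq> v) X"
  define Y' where "Y' = filter_mset (\<lambda>u. u \<noteq> v) Y"
  have Xd: "X = filter_mset (\<lambda>u. u = v) X + X'" unfolding X'_def by (rule multiset_partition)
  have Yd: "Y = filter_mset (\<lambda>u. u = v) Y + Y'" unfolding Y'_def by (rule multiset_partition)
  have sumX: "sum_mset X = count X v * v + sum_mset X'"
    by (subst Xd) (simp add: filter_eq_replicate_mset)
  have sumY: "sum_mset Y = count Y v * v + sum_mset Y'"
    by (subst Yd) (simp add: filter_eq_replicate_mset)
  have "size X' \<le> 3" using sX by (metis X'_def size_filter_mset_lesseq)
  moreover have "set_mset X' \<subseteq> insert 0 (S - {v})" using XB by (auto simp: X'_def)
  ultimately obtain L1 where L1: "set L1 \<subseteq> insert 0 (S - {v})" "length L1 = 3" "sum_list L1 = sum_mset X'"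
    using mset_to_list3 by blast
  have "size Y' \<le> 3" using sY by (metis Y'_def size_filter_mset_lesseq)
  moreover have "set_mset Y' \<subseteq> insert 0 (S - {v})" using YB by (auto simp: Y'_def)
  ultimately obtain L2 where L2: "set L2 \<subseteq> insert 0 (S - {v})" "length L2 = 3" "sum_list L2 = sum_mset Y'"
    using mset_to_list3 by blast
  define c where "c = count X v - count Y v"
  have "count X v \<le> 3" using count_le_size[of X v] sX by simp
  then have c: "c \<in> {1,2,3}" using lt by (auto simp: c_def)
  have "count X v * v = c * v + count Y v * v" using lt by (simp add: c_def diff_mult_distrib)
  then have "c * v + sum_list L1 = sum_list L2" using sum sumX sumY L1 L2 by linarith
  then show ?thesis using c L1 L2 by blast
qed

lemma decomp:
  fixes S :: "nat set"
  assumes S0: "0 \<notin> S" and nb: "\<not> B3 (insert 0 S)"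
  shows "\<exists>v\<in>S. \<exists>c\<in>{1,2,3::nat}. \<exists>L1 L2. set L1 \<subseteq> insert 0 (S - {v}) \<and> length L1 = 3 \<and>
            set L2 \<subseteq> insert 0 (S - {v}) \<and> length L2 = 3 \<and> c * v + sum_list L1 = sum_list L2"
proof -
  obtain X Y where XY: "set_mset X \<subseteq> insert 0 S" "set_mset Y \<subseteq> insert 0 S" "size X = 3" "size Y = 3"
    "sum_mset X = sum_mset Y" "X \<noteq> Y"
    using nb unfolding B3_def by blast
  have "\<exists>v. v \<noteq> 0 \<and> count X v \<noteq> count Y v"
  proof (rule ccontr)
    assume "\<not> ?thesis"
    then have h: "\<forall>v. v \<noteq> 0 \<longrightarrow> count X v = count Y v" by blast
    have f: "filter_mset (\<lambda>u. u \<noteq> 0) X = filter_mset (\<lambda>u. u \<noteq> 0) Y"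
      using h by (auto simp: multiset_eq_iff)
    have "size X = count X 0 + size (filter_mset (\<lambda>u. u \<noteq> 0) X)"
      by (subst multiset_partition[of X "\<lambda>u. u = 0"]) (simp add: filter_eq_replicate_mset)
    moreover have "size Y = count Y 0 + size (filter_mset (\<lambda>u. u \<noteq> 0) Y)"
      by (subst multiset_partition[of Y "\<lambda>u. u = 0"]) (simp add: filter_eq_replicate_mset)
    ultimately have "count X 0 = count Y 0" using XY f by simp
    then have "X = Y" using h by (metis multiset_eq_iff)
    then show False using XY by simp
  qed
  then obtain v where v: "v \<noteq> 0" "count X v \<noteq> count Y v" by blast
  have "v \<in># X \<or> v \<in># Y" using v by (metis count_eq_zero_iff)
  then have vS: "v \<in> S" using XY v by auto
  show ?thesis
  proof (cases "count Y v < count X v")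
    case True
    show ?thesis using decomp_oriented[OF XY(1-5) vS S0 True] vS by blast
  next
    case False
    then have "count X v < count Y v" using v by simp
    then show ?thesis using decomp_oriented[OF XY(2) XY(1) XY(4) XY(3) XY(5)[symmetric] vS S0] vS by blast
  qed
qed




theorem lemma1:
  fixes k :: nat
  assumes "k \<ge> 2"
  shows "\<exists>C::real. \<forall>N::nat.
    real (card {S. S \<subseteq> {1..N} \<and> card S = k \<and> \<not> irreducible (nonrec_part (F_poly S))})
      \<le> C * real N ^ (k - 1)"
proof (intro exI allI)
  fix N :: nat
  define Bad where "Bad = {S. S \<subseteq> {1..N} \<and> card S = k \<and> \<not> irreducible (nonrec_part (F_poly S))}"
  define Ts where "Ts = {T. T \<subseteq> {1..N} \<and> card T = k - 1}"
  define LL where "LL T = {L. set L \<subseteq> insert (0::nat) T \<and> length L = 3}" for T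
  define D where "D T = {1,2,3::nat} \<times> LL T \<times> LL T" for T
  define g where "g T = (\<lambda>(c::nat, L1::nat list, L2::nat list). insert ((sum_list L2 - sum_list L1) div c) T)" for T
  have sub: "Bad \<subseteq> (\<Union>T\<in>Ts. g T ` D T)"
  proof
    fix S assume "S \<in> Bad"
    then have S: "S \<subseteq> {1..N}" "card S = k" "\<not> irreducible (nonrec_part (F_poly S))" by (auto simp: Bad_def)
    have fS: "finite S" using S(1) finite_subset by blast
    have S0: "0 \<notin> S" using S(1) by auto
    have cS: "card S \<ge> 2" using S(2) assms by simp
    have "\<not> B3 (insert 0 S)" using main_alg[OF fS S0 cS] S(3) by blast
    then obtain v c L1 L2 where v: "v \<in> S" "c \<in> {1,2,3}" "set L1 \<subseteq> insert 0 (S - {v})" "length L1 = 3"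
        "set L2 \<subseteq> insert 0 (S - {v})" "length L2 = 3" "c * v + sum_list L1 = sum_list L2"
      using decomp[OF S0] by blast
    define T where "T = S - {v}"
    have "T \<in> Ts" using S v fS by (auto simp: Ts_def T_def)
    moreover have "(c, L1, L2) \<in> D T" using v by (simp add: D_def LL_def T_def)
    moreover have "g T (c, L1, L2) = S"
    proof -
      have "sum_list L2 - sum_list L1 = c * v" using v(7) by simp
      moreover have "c > 0" using v(2) by auto
      ultimately have "(sum_list L2 - sum_list L1) div c = v" by simp
      then show ?thesis using v(1) by (auto simp: g_def T_def)
    qed
    ultimately show "S \<in> (\<Union>T\<in>Ts. g T ` D T)" by (metis UN_iff imageI)
  qed
  have fTs: "finite Ts" unfolding Ts_def by (rule finite_subset[of _ "Pow {1..N}"]) auto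
  have cTs: "card Ts = N choose (k - 1)" unfolding Ts_def using n_subsets[of "{1..N}" "k - 1"] by simp
  have cTs': "card Ts \<le> N ^ (k - 1)"
  proof (cases "k - 1 \<le> N")
    case True then show ?thesis using cTs binomial_le_pow by simp
  next
    case False
    then have "N < k - 1" by simp
    then have z: "N choose (k - 1) = 0" by (rule binomial_eq_0)
    have "card Ts = 0" by (simp only: cTs z)
    then show ?thesis by simp
  qed
  have cD: "card (D T) \<le> 3 * k ^ 6" if "T \<in> Ts" for T
  proof -
    have fT: "finite T" and cT: "card T = k - 1" using that finite_subset[of T "{1..N}"] by (auto simp: Ts_def)
    have ci: "card (insert 0 T) \<le> k" using cT fT assms by (simp add: card_insert_if)
    have "card (LL T) = card (insert 0 T) ^ 3" unfolding LL_def by (rule card_lists_length_eq) (simp add: fT)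
    then have "card (D T) = 3 * (card (insert 0 T) ^ 3 * card (insert 0 T) ^ 3)"
      by (simp add: D_def card_cartesian_product)
    also have "\<dots> \<le> 3 * (k ^ 3 * k ^ 3)" using ci by (intro mult_le_mono2 mult_le_mono power_mono) auto
    finally show ?thesis by (simp add: power_add[symmetric])
  qed
  have fD: "finite (D T)" if "T \<in> Ts" for T
  proof -
    have fT: "finite T" using that finite_subset[of T "{1..N}"] by (auto simp: Ts_def)
    then show ?thesis unfolding D_def LL_def by (simp add: finite_lists_length_eq)
  qed
  have "card Bad \<le> card (\<Union>T\<in>Ts. g T ` D T)"
    by (rule card_mono) (use fTs fD sub in auto)
  also have "\<dots> \<le> (\<Sum>T\<in>Ts. card (g T ` D T))" by (rule card_UN_le[OF fTs])
  also have "\<dots> \<le> (\<Sum>T\<in>Ts. card (D T))" by (intro sum_mono card_image_le fD)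
  also have "\<dots> \<le> (\<Sum>T\<in>Ts. 3 * k ^ 6)" by (intro sum_mono cD)
  also have "\<dots> = card Ts * (3 * k ^ 6)" by simp
  also have "\<dots> \<le> N ^ (k - 1) * (3 * k ^ 6)" using cTs' by (rule mult_le_mono1)
  finally have "real (card Bad) \<le> real (N ^ (k - 1) * (3 * k ^ 6))" by (simp only: of_nat_le_iff)
  then show "real (card {S. S \<subseteq> {1..N} \<and> card S = k \<and> \<not> irreducible (nonrec_part (F_poly S))})
      \<le> real (3 * k ^ 6) * real N ^ (k - 1)"
    unfolding Bad_def by (simp add: mult.commute)
qed


end
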